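(* Let $(D,\tau,d,\Delta)$ be a TMO instance with optimal makespan $\mathrm{OPT}$ (with $t$ reachable from $s$). Then there exists a flow over time in $D$ with unit arc capacities and transit times $\tau$, with time horizon $\mathrm{OPT}+\Delta$ and value at least $d\cdot\Delta$.
   Context: TMO instance $(D,\tau,d,\Delta)$: directed graph $D=(V,A)$ with source $s$, sink $t$, travel times $\tau:A\to\mathbb{Z}_{\ge0}$, $d\in\mathbb{Z}_{\ge1}$ trains, headway $\Delta\in\mathbb{Z}_{\ge1}$. A train routing assigns to each train $i\in[d]$ an $s$-$t$-path $P_i$ and entry times $\lambda_i:P_i\to\mathbb{Z}_{\ge0}$; it is feasible if $\lambda_i(a)+\tau_a\le\lambda_i(a')$ for consecutive arcs $a,a'$ of $P_i$ and $|\lambda_i(a)-\lambda_{i'}(a)|\ge\Delta$ for $i\ne i'$, $a\in P_i\cap P_{i'}$; makespan $=\max_i\max_{a\in P_i}(\lambda_i(a)+\tau_a)$; $\mathrm{OPT}$ is the minimum makespan. A flow over time with unit capacities and time horizon $T$ (continuous-time model) consists of measurable inflow rate functions $f_a:\mathbb{R}\to[0,1]$, $a\in A$, with $f_a(\theta)=0$ for $\theta\notin[0,T-\tau_a)$, where flow entering $a$ at time $\theta$ leaves $a$ at time $\theta+\tau_a$, satisfying flow conservation without storage at every $v\notin\{s,t\}$: $\sum_{a\in\delta^-(v)}f_a(\theta-\tau_a)=\sum_{a\in\delta^+(v)}f_a(\theta)$ for almost all $\theta$. Its value is the net amount of flow arriving at $t$ by time $T$, $\sum_{a\in\delta^-(t)}\int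 f_a-\sum_{a\in\delta^+(t)}\int f_a$. *)

theory Defs
  imports "HOL-Analysis.Analysis"
begin

definition digraph :: "'v set \<Rightarrow> 'a set \<Rightarrow> ('a \<Rightarrow> 'v) \<Rightarrow> ('a \<Rightarrow> 'v) \<Rightarrow> bool" where
  "digraph V A tail head \<longleftrightarrow> finite V \<and> finite A \<and> (\<forall>a\<in>A. tail a \<in> V \<and> head a \<in> V)"

definition is_st_path :: "'a set \<Rightarrow> ('a \<Rightarrow> 'v) \<Rightarrow> ('a \<Rightarrow> 'v) \<Rightarrow> 'v \<Rightarrow> 'v \<Rightarrow> 'a list \<Rightarrow> bool" where
  "is_st_path A tail head s t p \<longleftrightarrow>
     p \<noteq> [] \<and> set p \<subseteq> A \<and> tail (p ! 0) = s \<and> head (last p) = t \<and>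
     (\<forall>j. Suc j < length p \<longrightarrow> head (p ! j) = tail (p ! Suc j)) \<and>
     distinct (map tail p @ [t])"

definition tmo_instance :: "'v set \<Rightarrow> 'a set \<Rightarrow> ('a \<Rightarrow> 'v) \<Rightarrow> ('a \<Rightarrow> 'v) \<Rightarrow> 'v \<Rightarrow> 'v
    \<Rightarrow> nat \<Rightarrow> nat \<Rightarrow> bool" where
  "tmo_instance V A tail head s t d Delta \<longleftrightarrow>
     digraph V A tail head \<and> s \<in> V \<and> t \<in> V \<and> s \<noteq> t \<and> d \<ge> 1 \<and> Delta \<ge> 1"

text \<open>A train routing: train i < d uses path P i with entry times lam i (a) for a in P i.
Feasibility as in the paper.\<close>

definition feasible_routing :: "'a set \<Rightarrow> ('a \<Rightarrow> 'v) \<Rightarrow> ('a \<Rightarrow> 'v) \<Rightarrow> 'v \<Rightarrow> 'v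
    \<Rightarrow> ('a \<Rightarrow> nat) \<Rightarrow> nat \<Rightarrow> nat \<Rightarrow> (nat \<Rightarrow> 'a list) \<Rightarrow> (nat \<Rightarrow> 'a \<Rightarrow> nat) \<Rightarrow> bool" where
  "feasible_routing A tail head s t tau d Delta P lam \<longleftrightarrow>
     (\<forall>i<d. is_st_path A tail head s t (P i)) \<and>
     (\<forall>i<d. \<forall>j. Suc j < length (P i) \<longrightarrow>
          lam i (P i ! j) + tau (P i ! j) \<le> lam i (P i ! Suc j)) \<and>
     (\<forall>i<d. \<forall>i'<d. \<forall>a. i \<noteq> i' \<and> a \<in> set (P i) \<and> a \<in> set (P i') \<longrightarrow>
          \<bar>int (lam i a) - int (lam i' a)\<bar> \<ge> int Delta)"

definition makespan :: "('a \<Rightarrow> nat) \<Rightarrow> nat \<Rightarrow> (nat \<Rightarrow> 'a list) \<Rightarrow> (nat \<Rightarrow> 'a \<Rightarrow> nat) \<Rightarrow> nat" where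
  "makespan tau d P lam = Max {lam i a + tau a | i a. i < d \<and> a \<in> set (P i)}"

definition tmo_opt :: "'a set \<Rightarrow> ('a \<Rightarrow> 'v) \<Rightarrow> ('a \<Rightarrow> 'v) \<Rightarrow> 'v \<Rightarrow> 'v
    \<Rightarrow> ('a \<Rightarrow> nat) \<Rightarrow> nat \<Rightarrow> nat \<Rightarrow> nat" where
  "tmo_opt A tail head s t tau d Delta =
     (LEAST m. \<exists>P lam. feasible_routing A tail head s t tau d Delta P lam \<and> makespan tau d P lam = m)"

definition flow_over_time :: "'v set \<Rightarrow> 'a set \<Rightarrow> ('a \<Rightarrow> 'v) \<Rightarrow> ('a \<Rightarrow> 'v) \<Rightarrow> 'v \<Rightarrow> 'v
    \<Rightarrow> ('a \<Rightarrow> nat) \<Rightarrow> real \<Rightarrow> ('a \<Rightarrow> real \<Rightarrow> real) \<Rightarrow> bool" where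
  "flow_over_time V A tail head s t tau T f \<longleftrightarrow>
     (\<forall>a\<in>A. f a \<in> borel_measurable lebesgue) \<and>
     (\<forall>a\<in>A. \<forall>\<theta>. 0 \<le> f a \<theta> \<and> f a \<theta> \<le> 1) \<and>
     (\<forall>a\<in>A. \<forall>\<theta>. \<theta> \<notin> {0..<T - real (tau a)} \<longrightarrow> f a \<theta> = 0) \<and>
     (\<forall>v\<in>V - {s, t}. AE \<theta> in lebesgue.
        (\<Sum>a\<in>{a\<in>A. head a = v}. f a (\<theta> - real (tau a))) = (\<Sum>a\<in>{a\<in>A. tail a = v}. f a \<theta>))"

definition flow_value :: "'a set \<Rightarrow> ('a \<Rightarrow> 'v) \<Rightarrow> ('a \<Rightarrow> 'v) \<Rightarrow> 'v
    \<Rightarrow> ('a \<Rightarrow> real \<Rightarrow> real) \<Rightarrow> real" where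
  "flow_value A tail head t f =
     (\<Sum>a\<in>{a\<in>A. head a = t}. integral\<^sup>L lebesgue (f a)) - (\<Sum>a\<in>{a\<in>A. tail a = t}. integral\<^sup>L lebesgue (f a))"

end

theory Submission
  imports Defs "Graph_Theory.Shortest_Path"
begin


lemma opt_exists:
  assumes "tmo_instance V A ta he s t d Delta" "is_st_path A ta he s t q"
  shows "\<exists>P lam. feasible_routing A ta he s t tau d Delta P lam \<and>
     makespan tau d P lam = tmo_opt A ta he s t tau d Delta"
proof -
  have dq: "distinct q" using assms(2) unfolding is_st_path_def
    by (metis distinct_append distinct_map)
  define pos where "pos a = (LEAST j. j < length q \<and> q ! j = a)" for a
  have pos: "pos (q ! j) = j" if "j < length q" for j
  proof -
    have "(LEAST k. k < length q \<and> q ! k = q ! j) = j"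
      by (rule Least_equality) (use that dq nth_eq_iff_index_eq in \<open>auto simp: not_le\<close>)
    then show ?thesis by (simp add: pos_def)
  qed
  define lam where "lam i a = i * Delta + (\<Sum>k<pos a. tau (q ! k))" for i a
  have feas: "feasible_routing A ta he s t tau d Delta (\<lambda>_. q) lam"
    unfolding feasible_routing_def
  proof (intro conjI allI impI)
    fix i j assume "i < d" "Suc j < length (q)"
    then show "lam i (q ! j) + tau (q ! j) \<le> lam i (q ! Suc j)"
      by (simp add: lam_def pos)
  next
    fix i i' a assume h: "i < d" "i' < d" "i \<noteq> i' \<and> a \<in> set q \<and> a \<in> set q"
    have "\<bar>int (lam i a) - int (lam i' a)\<bar> = \<bar>int i - int i'\<bar> * int Delta"
      proof -
      have "int (lam i a) - int (lam i' a) = (int i - int i') * int Delta"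
        by (simp add: lam_def algebra_simps)
      then show ?thesis by (simp add: abs_mult)
    qed
    also have "\<dots> \<ge> 1 * int Delta" using h(3)
      by (intro mult_right_mono) auto
    finally show "int Delta \<le> \<bar>int (lam i a) - int (lam i' a)\<bar>" by simp
  qed (use assms(2) in auto)
  then have "\<exists>m P lam. feasible_routing A ta he s t tau d Delta P lam \<and> makespan tau d P lam = m"
    by blast
  then obtain m where "\<exists>P lam. feasible_routing A ta he s t tau d Delta P lam \<and> makespan tau d P lam = m" by blast
  from LeastI[of "\<lambda>m. \<exists>P lam. feasible_routing A ta he s t tau d Delta P lam \<and> makespan tau d P lam = m", OF this]
  show ?thesis unfolding tmo_opt_def .
qed



lemma st_path_facts:
  assumes "is_st_path A ta he s t Q"
  shows "Q \<noteq> []" "set Q \<subseteq> A" "ta (Q ! 0) = s" "he (last Q) = t"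
    "\<And>j. Suc j < length Q \<Longrightarrow> he (Q ! j) = ta (Q ! Suc j)"
    "distinct (map ta Q @ [t])"
    "\<And>j. j < length Q \<Longrightarrow> he (Q ! j) = (map ta Q @ [t]) ! Suc j"
    "\<And>j. j < length Q \<Longrightarrow> ta (Q ! j) = (map ta Q @ [t]) ! j"
    "distinct Q"
proof -
  show ne: "Q \<noteq> []" "set Q \<subseteq> A" "ta (Q ! 0) = s" and hl: "he (last Q) = t"
    and c: "\<And>j. Suc j < length Q \<Longrightarrow> he (Q ! j) = ta (Q ! Suc j)"
    and "distinct (map ta Q @ [t])"
    using assms unfolding is_st_path_def by auto
  then show "distinct Q" by (metis distinct_append distinct_map)
  show "ta (Q ! j) = (map ta Q @ [t]) ! j" if "j < length Q" for j
    using that by (simp add: nth_append)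
  show "he (Q ! j) = (map ta Q @ [t]) ! Suc j" if "j < length Q" for j
  proof (cases "Suc j < length Q")
    case True
    then show ?thesis using c[OF True] by (simp add: nth_append)
  next
    case False
    then have "j = length Q - 1" using that by simp
    then have "Q ! j = last Q" using ne by (simp add: last_conv_nth)
    then show ?thesis using hl False that by (simp add: nth_append)
  qed
qed

lemma sum_restrict_Q:
  assumes "finite S" "\<forall>a\<in>S - B. g a = 0"
  shows "sum g S = sum g (S \<inter> B)"
  using assms by (intro sum.mono_neutral_right) auto

lemma path_flow:
  fixes T :: real
  assumes inst: "tmo_instance V A ta he s t d Delta"
    and Q: "is_st_path A ta he s t Q"
    and LT: "real (sum_list (map tau Q)) \<le> T"
  shows "\<exists>h. flow_over_time V A ta he s t tau T h \<and> (\<forall>a. integrable lebesgue (h a))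
     \<and> (\<forall>a. a \<notin> set Q \<longrightarrow> (\<forall>x. h a x = 0))
     \<and> flow_value A ta he t h = T - real (sum_list (map tau Q))"
proof -
  note F = st_path_facts[OF Q]
  have finA: "finite A" and st: "s \<noteq> t" "s \<in> V" "t \<in> V" and ends: "\<forall>a\<in>A. ta a \<in> V \<and> he a \<in> V"
    using inst unfolding tmo_instance_def Defs.digraph_def by auto
  let ?n = "length Q"
  let ?vs = "map ta Q @ [t]"
  define pos where "pos a = (LEAST j. j < ?n \<and> Q ! j = a)" for a
  have pos: "pos (Q ! j) = j" if "j < ?n" for j
  proof -
    have "(LEAST k. k < ?n \<and> Q ! k = Q ! j) = j"
      by (rule Least_equality) (use that F(9) nth_eq_iff_index_eq in \<open>auto simp: not_le\<close>)
    then show ?thesis by (simp add: pos_def)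
  qed
  define L where "L = real (sum_list (map tau Q))"
  define w where "w = T - L"
  have w0: "0 \<le> w" using LT unfolding w_def L_def by simp
  define del where "del a = real (\<Sum>k<pos a. tau (Q ! k))" for a
  have del: "del (Q ! j) = real (\<Sum>k<j. tau (Q ! k))" if "j < ?n" for j
    using pos[OF that] by (simp add: del_def)
  have Lsum: "L = real (\<Sum>k<?n. tau (Q ! k))"
    unfolding L_def by (simp add: sum_list_sum_nth atLeast0LessThan)
  have delle: "del (Q ! j) + tau (Q ! j) \<le> L" if "j < ?n" for j
  proof -
    have "(\<Sum>k<Suc j. tau (Q ! k)) \<le> (\<Sum>k<?n. tau (Q ! k))"
      by (rule sum_mono2) (use that in auto)
    then have "real (\<Sum>k<Suc j. tau (Q ! k)) \<le> real (\<Sum>k<?n. tau (Q ! k))" by (simp only: of_nat_le_iff)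
    then show ?thesis unfolding del[OF that] Lsum by (simp only: sum.lessThan_Suc of_nat_add)
  qed
  define h where "h a x = (if a \<in> set Q then indicator {del a..<del a + w} x else 0 :: real)" for a x
  have meas: "h a \<in> borel_measurable lebesgue" for a
    unfolding h_def by (cases "a \<in> set Q") (auto intro: borel_measurable_indicator)
  have integ: "integrable lebesgue (h a)" for a
  proof (cases "a \<in> set Q")
    case True
    have "emeasure lborel {del a..<del a + w} < top" using w0 by (simp add: emeasure_lborel_Ico)
    then show ?thesis using True unfolding h_def by (simp add: integrable_indicator_iff)
  next
    case False
    then have "h a = (\<lambda>x. 0)" by (auto simp: h_def)
    then show ?thesis by simp
  qed
  have intg: "integral\<^sup>L lebesgue (h a) = (if a \<in> set Q then w else 0)" for a
  proof (cases "a \<in> set Q")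
    case False
    then have "h a = (\<lambda>x. 0)" by (auto simp: h_def)
    then show ?thesis using False by simp
  next
    case True
    then have "h a = indicator {del a..<del a + w}" by (auto simp: h_def)
    then show ?thesis using True w0 by (simp add: integral_indicator)
  qed
  have supp: "h a x = 0" if "x \<notin> {0..<T - real (tau a)}" for a x
  proof (cases "a \<in> set Q")
    case True
    then obtain j where j: "j < ?n" "a = Q ! j" by (metis in_set_conv_nth)
    have "del a \<ge> 0" unfolding del_def by (simp add: sum_nonneg)
    moreover have "del a + w \<le> T - real (tau a)" using delle[OF j(1)] j(2) unfolding w_def by simp
    ultimately show ?thesis using that unfolding h_def by (auto simp: indicator_def)
  qed (simp add: h_def)
  have tainj: "j = k" if "j < ?n" "k < ?n" "ta (Q ! j) = ta (Q ! k)" for j k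
  proof -
    have "?vs ! j = ?vs ! k" using that F(8) by metis
    moreover have "j < length ?vs" "k < length ?vs" using that by auto
    ultimately show ?thesis using F(6) nth_eq_iff_index_eq by blast
  qed
  have heinj: "j = k" if "j < ?n" "k < ?n" "he (Q ! j) = he (Q ! k)" for j k
  proof -
    have "?vs ! Suc j = ?vs ! Suc k" using that F(7) by metis
    moreover have "Suc j < length ?vs" "Suc k < length ?vs" using that by auto
    ultimately show ?thesis using F(6) nth_eq_iff_index_eq by blast
  qed
  have hene_s: "he (Q ! j) \<noteq> s" if "j < ?n" for j
  proof
    assume "he (Q ! j) = s"
    then have "?vs ! Suc j = ?vs ! 0" using F(3,7,8) that by (metis gr_zeroI less_nat_zero_code)
    then show False using F(6) that by (simp add: nth_eq_iff_index_eq)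
  qed
  have tane_t: "ta (Q ! j) \<noteq> t" if "j < ?n" for j
  proof
    assume "ta (Q ! j) = t"
    then have "t \<in> set (map ta Q)" using that by (metis in_set_conv_nth length_map nth_map)
    then show False using F(6) by simp
  qed
  have conserv: "(\<Sum>a\<in>{a\<in>A. he a = v}. h a (x - real (tau a))) = (\<Sum>a\<in>{a\<in>A. ta a = v}. h a x)"
    if v: "v \<noteq> s" "v \<noteq> t" for v x
  proof -
    have z: "\<forall>a. a \<notin> set Q \<longrightarrow> h a y = 0" for y by (simp add: h_def)
    have e1: "(\<Sum>a\<in>{a\<in>A. he a = v}. h a (x - real (tau a))) = (\<Sum>a\<in>{a\<in>A. he a = v} \<inter> set Q. h a (x - real (tau a)))"
      by (rule sum_restrict_Q) (use finA z in auto)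
    have e2: "(\<Sum>a\<in>{a\<in>A. ta a = v}. h a x) = (\<Sum>a\<in>{a\<in>A. ta a = v} \<inter> set Q. h a x)"
      by (rule sum_restrict_Q) (use finA z in auto)
    show ?thesis
    proof (cases "\<exists>j<?n. he (Q ! j) = v")
      case True
      then obtain j where j: "j < ?n" "he (Q ! j) = v" by blast
      have sj: "Suc j < ?n"
      proof (rule ccontr)
        assume "\<not> Suc j < ?n"
        then have "j = length Q - 1" using j(1) by simp
        then have "Q ! j = last Q" using F(1) by (simp add: last_conv_nth)
        then show False using j F(4) v by simp
      qed
      have tj: "ta (Q ! Suc j) = v" using F(5)[OF sj] j by simp
      have qjA: "Q ! j \<in> A" "Q ! Suc j \<in> A" using F(2) j(1) sj by (meson nth_mem subsetD)+
      have s1: "{a\<in>A. he a = v} \<inter> set Q = {Q ! j}"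
      proof (intro set_eqI iffI)
        fix a assume "a \<in> {a\<in>A. he a = v} \<inter> set Q"
        then obtain i where i: "i < ?n" "a = Q ! i" "he a = v" by (auto simp: in_set_conv_nth)
        then have "i = j" using heinj[OF i(1) j(1)] j(2) by simp
        then show "a \<in> {Q ! j}" using i by simp
      qed (use qjA j in auto)
      have s2: "{a\<in>A. ta a = v} \<inter> set Q = {Q ! Suc j}"
      proof (intro set_eqI iffI)
        fix a assume "a \<in> {a\<in>A. ta a = v} \<inter> set Q"
        then obtain i where i: "i < ?n" "a = Q ! i" "ta a = v" by (auto simp: in_set_conv_nth)
        then have "i = Suc j" using tainj[OF i(1) sj] tj by simp
        then show "a \<in> {Q ! Suc j}" using i by simp
      qed (use qjA tj sj in auto)
      have dd: "del (Q ! Suc j) = del (Q ! j) + real (tau (Q ! j))"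
        using del[OF sj] del[OF j(1)] by simp
      show ?thesis unfolding e1 e2 s1 s2 using j(1) sj
        by (simp add: h_def dd indicator_def algebra_simps)
    next
      case False
      have s1: "{a\<in>A. he a = v} \<inter> set Q = {}"
        using False by (auto simp: in_set_conv_nth)
      have s2: "{a\<in>A. ta a = v} \<inter> set Q = {}"
      proof -
        have "ta (Q ! k) \<noteq> v" if "k < ?n" for k
        proof (cases k)
          case 0 then show ?thesis using F(3) v by simp
        next
          case (Suc k') then show ?thesis using F(5)[of k'] that False by force
        qed
        then show ?thesis by (force simp: in_set_conv_nth)
      qed
      show ?thesis unfolding e1 e2 s1 s2 by simp
    qed
  qed
  have fot: "flow_over_time V A ta he s t tau T h"
    unfolding flow_over_time_def
  proof (intro conjI ballI allI impI)
    fix v assume "v \<in> V - {s, t}"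
    then show "AE x in lebesgue. (\<Sum>a\<in>{a\<in>A. he a = v}. h a (x - real (tau a))) = (\<Sum>a\<in>{a\<in>A. ta a = v}. h a x)"
      using conserv by auto
  qed (use meas supp in \<open>auto simp: h_def indicator_def\<close>)
  have val: "flow_value A ta he t h = w"
  proof -
    have z: "\<forall>a. a \<notin> set Q \<longrightarrow> integral\<^sup>L lebesgue (h a) = 0" by (simp add: intg)
    have e1: "(\<Sum>a\<in>{a\<in>A. he a = t}. integral\<^sup>L lebesgue (h a)) = (\<Sum>a\<in>{a\<in>A. he a = t} \<inter> set Q. integral\<^sup>L lebesgue (h a))"
      by (rule sum_restrict_Q) (use finA z in auto)
    have e2: "(\<Sum>a\<in>{a\<in>A. ta a = t}. integral\<^sup>L lebesgue (h a)) = (\<Sum>a\<in>{a\<in>A. ta a = t} \<inter> set Q. integral\<^sup>L lebesgue (h a))"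
      by (rule sum_restrict_Q) (use finA z in auto)
    have nl: "?n - 1 < ?n" using F(1) by simp
    have ql: "Q ! (?n - 1) = last Q" using F(1) by (simp add: last_conv_nth)
    have s1: "{a\<in>A. he a = t} \<inter> set Q = {last Q}"
    proof -
      have "a = last Q" if "a \<in> set Q" "he a = t" for a
      proof -
        from that(1) obtain k where k: "k < ?n" "a = Q ! k" unfolding in_set_conv_nth by blast
        then show ?thesis using heinj[OF k(1) nl] that F(4) ql by auto
      qed
      then show ?thesis using F(1,2,4) by auto
    qed
    have s2: "{a\<in>A. ta a = t} \<inter> set Q = {}"
      using tane_t by (force simp: in_set_conv_nth)
    show ?thesis unfolding flow_value_def e1 e2 s1 s2 using F(1) by (simp add: intg)
  qed
  show ?thesis
    by (rule exI[of _ h]) (use fot integ val in \<open>auto simp: h_def w_def L_def\<close>)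
qed



definition dv :: "'a set \<Rightarrow> ('a \<Rightarrow> 'v) \<Rightarrow> ('a \<Rightarrow> 'v) \<Rightarrow> 'v \<Rightarrow> int" where
  "dv X ta he v = (\<Sum>a\<in>X. (if he a = v then 1 else 0) - (if ta a = v then 1 else 0))"

definition conserving :: "'a set \<Rightarrow> ('a \<Rightarrow> 'v) \<Rightarrow> ('a \<Rightarrow> 'v) \<Rightarrow> 'v \<Rightarrow> 'v \<Rightarrow> bool" where
  "conserving X ta he s t \<longleftrightarrow> (\<forall>v. v \<noteq> s \<longrightarrow> v \<noteq> t \<longrightarrow> dv X ta he v = 0)"

definition rr :: "('a \<Rightarrow> 'v) \<Rightarrow> ('a \<Rightarrow> 'v) \<Rightarrow> ('a \<Rightarrow> nat) \<Rightarrow> ('v \<Rightarrow> int) \<Rightarrow> 'a \<Rightarrow> int" where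
  "rr ta he tau p a = p (he a) - p (ta a) - int (tau a)"

lemma dv_weighted:
  assumes "finite X" "finite V" "\<forall>a\<in>X. ta a \<in> V \<and> he a \<in> V"
  shows "(\<Sum>v\<in>V. F v * dv X ta he v) = (\<Sum>a\<in>X. F (he a) - F (ta a))"
proof -
  have "(\<Sum>v\<in>V. F v * dv X ta he v) = (\<Sum>v\<in>V. \<Sum>a\<in>X. F v * ((if he a = v then 1 else 0) - (if ta a = v then 1 else 0)))"
    unfolding dv_def by (simp add: sum_distrib_left)
  also have "\<dots> = (\<Sum>a\<in>X. \<Sum>v\<in>V. F v * ((if he a = v then 1 else 0) - (if ta a = v then 1 else 0)))"
    by (rule sum.swap)
  also have "\<dots> = (\<Sum>a\<in>X. F (he a) - F (ta a))"
  proof (rule sum.cong)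
    fix a assume "a \<in> X"
    then have "he a \<in> V" "ta a \<in> V" using assms(3) by auto
    have "F v * ((if he a = v then 1 else 0) - (if ta a = v then 1 else 0)) = (if v = he a then F v else 0) - (if v = ta a then F v else 0)" for v
      by auto
    then have "(\<Sum>v\<in>V. F v * ((if he a = v then 1 else 0) - (if ta a = v then 1 else 0))) = (\<Sum>v\<in>V. (if v = he a then F v else 0)) - (\<Sum>v\<in>V. (if v = ta a then F v else 0))"
      by (simp only: sum_subtractf)
    then show "(\<Sum>v\<in>V. F v * ((if he a = v then 1 else 0) - (if ta a = v then 1 else 0))) = F (he a) - F (ta a)"
      using assms(2) \<open>he a \<in> V\<close> \<open>ta a \<in> V\<close> by (simp add: sum.delta)
  qed simp
  finally show ?thesis .
qed

lemma dv_cons_sum: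
  assumes "conserving X ta he s t" "finite V" "s \<in> V" "t \<in> V" "s \<noteq> t"
  shows "(\<Sum>v\<in>V. F v * dv X ta he v) = F s * dv X ta he s + F t * dv X ta he t"
proof -
  have "(\<Sum>v\<in>V. F v * dv X ta he v) = (\<Sum>v\<in>V. (if v = s then F s * dv X ta he s else 0) + (if v = t then F t * dv X ta he t else 0))"
    by (rule sum.cong) (use assms(1,5) in \<open>auto simp: conserving_def\<close>)
  also have "\<dots> = F s * dv X ta he s + F t * dv X ta he t"
    using assms by (simp add: sum.distrib sum.delta)
  finally show ?thesis .
qed

lemma cas_nth: "pre_digraph.cas G u Q v \<Longrightarrow> Suc j < length Q \<Longrightarrow> head G (Q ! j) = tail G (Q ! Suc j)"
proof (induction Q arbitrary: u j)
  case Nil then show ?case by simp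
next
  case (Cons a Q)
  show ?case
  proof (cases j)
    case 0
    then show ?thesis using Cons.prems by (cases Q) (auto simp: pre_digraph.cas.simps)
  next
    case (Suc j')
    then show ?thesis using Cons by (auto simp: pre_digraph.cas.simps)
  qed
qed

lemma cas_ends: "pre_digraph.cas G u Q v \<Longrightarrow> Q \<noteq> [] \<Longrightarrow> head G (last Q) = v \<and> tail G (Q ! 0) = u"
proof (induction Q arbitrary: u)
  case Nil then show ?case by simp
next
  case (Cons a Q)
  then show ?case by (cases Q) (auto simp: pre_digraph.cas.simps)
qed

lemma cas_nil: "pre_digraph.cas G u [] v \<Longrightarrow> u = v"
  by (simp add: pre_digraph.cas.simps)

lemma cas_tele:
  fixes g :: "'v \<Rightarrow> 'b::ab_group_add"
  shows "pre_digraph.cas G u Q v \<Longrightarrow> sum_list (map (\<lambda>a. g (head G a) - g (tail G a)) Q) = g v - g u"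
proof (induction Q arbitrary: u)
  case Nil then show ?case by (simp add: pre_digraph.cas.simps)
next
  case (Cons a Q)
  then show ?case by (auto simp: pre_digraph.cas.simps)
qed

definition sg :: "'v set \<Rightarrow> 'a set \<Rightarrow> ('a \<Rightarrow> 'v) \<Rightarrow> ('a \<Rightarrow> 'v) \<Rightarrow> ('v, 'a) pre_digraph" where
  "sg V X ta he = \<lparr>verts = V, arcs = X, tail = ta, head = he\<rparr>"

lemma path_exists:
  assumes inst: "tmo_instance V A ta he s t d Delta"
    and XA: "X \<subseteq> A" and cons: "conserving X ta he s t" and pos: "dv X ta he t > 0"
  shows "\<exists>Q. pre_digraph.apath (sg V X ta he) s Q t"
proof -
  have finA: "finite A" and st: "s \<noteq> t" "s \<in> V" "t \<in> V" and ends: "\<forall>a\<in>A. ta a \<in> V \<and> he a \<in> V"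
    and finV: "finite V"
    using inst unfolding tmo_instance_def Defs.digraph_def by auto
  let ?G = "sg V X ta he"
  have wf: "wf_digraph ?G" unfolding wf_digraph_def sg_def using XA ends by auto
  have finX: "finite X" using XA finA finite_subset by blast
  have endsX: "\<forall>a\<in>X. ta a \<in> V \<and> he a \<in> V" using XA ends by auto
  define R where "R = {v \<in> V. s \<rightarrow>\<^sup>*\<^bsub>?G\<^esub> v}"
  have sR: "s \<in> R" unfolding R_def using st wf_digraph.reachable_refl[OF wf] by (simp add: sg_def)
  have clo: "he a \<in> R" if "a \<in> X" "ta a \<in> R" for a
  proof -
    have "(ta a, he a) \<in> arcs_ends ?G"
      using wf_digraph.in_arcs_imp_in_arcs_ends[OF wf, of a] that by (simp add: sg_def)
    then have "s \<rightarrow>\<^sup>*\<^bsub>?G\<^esub> he a"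
      using that wf_digraph.reachable_adj_trans[OF wf] unfolding R_def by blast
    then show ?thesis unfolding R_def using that endsX by blast
  qed
  have tR: "t \<in> R"
  proof (rule ccontr)
    assume tn: "t \<notin> R"
    define F where "F v = (if v \<in> R then 1 else 0 :: int)" for v
    have "(\<Sum>v\<in>V. F v * dv X ta he v) = (\<Sum>a\<in>X. F (he a) - F (ta a))"
      by (rule dv_weighted[OF finX finV endsX])
    also have "\<dots> \<ge> 0" by (rule sum_nonneg) (use clo in \<open>auto simp: F_def\<close>)
    finally have "F s * dv X ta he s + F t * dv X ta he t \<ge> 0"
      using dv_cons_sum[OF cons finV st(2,3,1)] by simp
    then have ds: "dv X ta he s \<ge> 0" using sR tn by (simp add: F_def)
    have "(\<Sum>v\<in>V. 1 * dv X ta he v) = (\<Sum>a\<in>X. (1::int) - 1)"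
      by (rule dv_weighted[OF finX finV endsX])
    then have "1 * dv X ta he s + 1 * dv X ta he t = 0"
      using dv_cons_sum[OF cons finV st(2,3,1), of "\<lambda>_. 1"] by simp
    then show False using ds pos by simp
  qed
  then have "s \<rightarrow>\<^sup>*\<^bsub>?G\<^esub> t" unfolding R_def by blast
  then show ?thesis using wf_digraph.reachable_apath[OF wf] by blast
qed





lemma cut_bound:
  assumes inst: "tmo_instance V A ta he s t d Delta"
    and feas: "feasible_routing A ta he s t tau d Delta P lam"
    and ps: "p s = 0" and pt: "p t = int (makespan tau d P lam + Delta)"
  shows "int (d * Delta) \<le> (\<Sum>a\<in>A. nat (rr ta he tau p a))"
proof -
  let ?M = "makespan tau d P lam"
  have finA: "finite A" using inst unfolding tmo_instance_def Defs.digraph_def by blast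
  have paths: "is_st_path A ta he s t (P i)" if "i < d" for i
    using feas that unfolding feasible_routing_def by blast
  have cons: "lam i (P i ! j) + tau (P i ! j) \<le> lam i (P i ! Suc j)" if "i < d" "Suc j < length (P i)" for i j
    using feas that unfolding feasible_routing_def by blast
  have hw: "int Delta \<le> \<bar>int (lam i a) - int (lam i' a)\<bar>"
    if "i < d" "i' < d" "i \<noteq> i'" "a \<in> set (P i)" "a \<in> set (P i')" for i i' a
    using feas that unfolding feasible_routing_def by blast
  have finS: "finite {lam i a + tau a | i a. i < d \<and> a \<in> set (P i)}"
  proof -
    have "{lam i a + tau a | i a. i < d \<and> a \<in> set (P i)} = (\<lambda>(i,a). lam i a + tau a) ` (SIGMA i:{..<d}. set (P i))"
      by auto
    then show ?thesis by simp
  qed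
  have mk: "lam i a + tau a \<le> ?M" if "i < d" "a \<in> set (P i)" for i a
    unfolding makespan_def by (rule Max_ge[OF finS]) (use that in blast)
  have cross: "\<exists>k<length (P i). p (ta (P i ! k)) \<le> int (lam i (P i ! k)) + int u \<and>
       int (lam i (P i ! k)) + int u + int (tau (P i ! k)) < p (he (P i ! k))"
    if iu: "i < d" "u < Delta" for i u
  proof (rule ccontr)
    assume nc: "\<not> ?thesis"
    let ?Q = "P i"
    have Q: "is_st_path A ta he s t ?Q" using paths iu by blast
    have late: "p (ta (?Q ! j)) \<le> int (lam i (?Q ! j)) + int u" if "j < length ?Q" for j
      using that
    proof (induction j)
      case 0
      then show ?case using Q ps unfolding is_st_path_def by simp
    next
      case (Suc j)
      have "p (ta (?Q ! j)) \<le> int (lam i (?Q ! j)) + int u" using Suc by simp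
      then have "p (he (?Q ! j)) \<le> int (lam i (?Q ! j)) + int u + int (tau (?Q ! j))"
        using nc Suc.prems by force
      moreover have "he (?Q ! j) = ta (?Q ! Suc j)" using Q Suc.prems unfolding is_st_path_def by blast
      moreover have "int (lam i (?Q ! j)) + int (tau (?Q ! j)) \<le> int (lam i (?Q ! Suc j))"
        using cons[OF iu(1) Suc.prems] by linarith
      ultimately show ?case by (smt (verit))
    qed
    have ne: "?Q \<noteq> []" using Q unfolding is_st_path_def by blast
    define j where "j = length ?Q - 1"
    have j: "j < length ?Q" using ne unfolding j_def by (cases ?Q) auto
    have lastj: "?Q ! j = last ?Q" using ne unfolding j_def by (simp add: last_conv_nth)
    have "he (last ?Q) = t" using Q unfolding is_st_path_def by blast
    then have "p (he (?Q ! j)) \<le> int (lam i (?Q ! j)) + int u + int (tau (?Q ! j))"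
      using nc late[OF j] j by (force simp: lastj)
    moreover have "lam i (?Q ! j) + tau (?Q ! j) \<le> ?M"
      using mk iu j by (simp add: lastj) (metis last_in_set ne)
    ultimately show False using iu pt lastj \<open>he (last ?Q) = t\<close> by simp
  qed
  define kf where "kf i u = (SOME k. k<length (P i) \<and> p (ta (P i ! k)) \<le> int (lam i (P i ! k)) + int u \<and>
       int (lam i (P i ! k)) + int u + int (tau (P i ! k)) < p (he (P i ! k)))" for i u
  have kf: "kf i u < length (P i) \<and> p (ta (P i ! kf i u)) \<le> int (lam i (P i ! kf i u)) + int u \<and>
       int (lam i (P i ! kf i u)) + int u + int (tau (P i ! kf i u)) < p (he (P i ! kf i u))"
    if "i < d" "u < Delta" for i u
    unfolding kf_def by (rule someI_ex) (use cross[OF that] in blast)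
  define g where "g = (\<lambda>(i,u). (P i ! kf i u, int (lam i (P i ! kf i u)) + int u))"
  let ?D = "{..<d} \<times> {..<Delta}"
  let ?B = "SIGMA a:A. {p (ta a)..<p (he a) - int (tau a)}"
  have sub: "g ` ?D \<subseteq> ?B"
  proof
    fix y assume "y \<in> g ` ?D"
    then obtain i u where iu: "i < d" "u < Delta" "y = g (i,u)" by auto
    have "P i ! kf i u \<in> A" using paths[OF iu(1)] kf[OF iu(1,2)] unfolding is_st_path_def
      by (meson nth_mem subsetD)
    then show "y \<in> ?B" using kf[OF iu(1,2)] iu(3) by (auto simp: g_def)
  qed
  have inj: "inj_on g ?D"
  proof (rule inj_onI)
    fix x y assume x: "x \<in> ?D" and y: "y \<in> ?D" and e: "g x = g y"
    obtain i u where xi: "x = (i,u)" "i < d" "u < Delta" using x by auto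
    obtain i' u' where yi: "y = (i',u')" "i' < d" "u' < Delta" using y by auto
    let ?a = "P i ! kf i u"
    have a1: "?a \<in> set (P i)" using kf[OF xi(2,3)] by simp
    have ea: "P i' ! kf i' u' = ?a" and el: "int (lam i ?a) + int u = int (lam i' ?a) + int u'"
      using e xi yi by (auto simp: g_def)
    have a2: "?a \<in> set (P i')" using kf[OF yi(2,3)] ea by (metis nth_mem)
    show "x = y"
    proof (cases "i = i'")
      case True
      then show ?thesis using el xi yi by simp
    next
      case False
      have "int Delta \<le> \<bar>int (lam i ?a) - int (lam i' ?a)\<bar>" using hw[OF xi(2) yi(2) False a1 a2] .
      then show ?thesis using el xi(3) yi(3) by linarith
    qed
  qed
  have "card ?D \<le> card ?B"
    by (rule card_inj_on_le[OF inj sub]) (use finA in auto)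
  also have "card ?B = (\<Sum>a\<in>A. nat (rr ta he tau p a))"
    using finA by (simp add: card_SigmaI rr_def algebra_simps)
  finally have h: "d * Delta \<le> (\<Sum>a\<in>A. nat (rr ta he tau p a))" by simp
  show ?thesis using h by (metis of_nat_le_iff)
qed



lemma apath_st:
  assumes ap: "pre_digraph.apath (sg V X ta he) s Q t" and st: "s \<noteq> t" and XA: "X \<subseteq> A"
  shows "is_st_path A ta he s t Q" "set Q \<subseteq> X" "pre_digraph.cas (sg V X ta he) s Q t"
proof -
  let ?G = "sg V X ta he"
  have aw: "pre_digraph.awalk ?G s Q t" and di: "distinct (pre_digraph.awalk_verts ?G s Q)"
    using ap unfolding pre_digraph.apath_def by auto
  then show sQ: "set Q \<subseteq> X" and cas: "pre_digraph.cas ?G s Q t"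
    unfolding pre_digraph.awalk_def by (auto simp: sg_def)
  have ne: "Q \<noteq> []"
  proof
    assume "Q = []"
    with cas have "s = t" by (simp add: pre_digraph.cas.simps)
    with st show False by simp
  qed
  have e: "he (last Q) = t" "ta (Q ! 0) = s" using cas_ends[OF cas ne] by (auto simp: sg_def)
  have "pre_digraph.awalk_verts ?G s Q = map ta Q @ [t]"
    using ne e by (simp add: pre_digraph.awalk_verts_conv sg_def)
  then have "distinct (map ta Q @ [t])" using di by simp
  moreover have "he (Q ! j) = ta (Q ! Suc j)" if "Suc j < length Q" for j
    using cas_nth[OF cas that] by (simp add: sg_def)
  ultimately show "is_st_path A ta he s t Q"
    unfolding is_st_path_def using ne e sQ XA by auto
qed

lemma flow_zero:
  assumes inst: "tmo_instance V A ta he s t d Delta"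
  shows "flow_over_time V A ta he s t tau T (\<lambda>a x. 0) \<and> flow_value A ta he t (\<lambda>a x. 0) = 0"
  unfolding flow_over_time_def flow_value_def by simp

lemma flow_add:
  assumes fg: "flow_over_time V A ta he s t tau T g" and fh: "flow_over_time V A ta he s t tau T h"
    and ig: "\<forall>a. integrable lebesgue (g a)" and ih: "\<forall>a. integrable lebesgue (h a)"
    and dis: "\<forall>a x. g a x = 0 \<or> h a x = 0"
  shows "flow_over_time V A ta he s t tau T (\<lambda>a x. g a x + h a x)"
    "flow_value A ta he t (\<lambda>a x. g a x + h a x) = flow_value A ta he t g + flow_value A ta he t h"
    "\<forall>a. integrable lebesgue (\<lambda>x. g a x + h a x)"
proof -
  show "\<forall>a. integrable lebesgue (\<lambda>x. g a x + h a x)" using ig ih by auto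
  have int: "integral\<^sup>L lebesgue (\<lambda>x. g a x + h a x) = integral\<^sup>L lebesgue (g a) + integral\<^sup>L lebesgue (h a)" for a
    using ig ih by (simp add: Bochner_Integration.integral_add)
  show "flow_value A ta he t (\<lambda>a x. g a x + h a x) = flow_value A ta he t g + flow_value A ta he t h"
    unfolding flow_value_def int by (simp add: sum.distrib)
  show "flow_over_time V A ta he s t tau T (\<lambda>a x. g a x + h a x)"
    unfolding flow_over_time_def
  proof (intro conjI ballI allI impI)
    fix a assume "a \<in> A"
    then have "g a \<in> borel_measurable lebesgue" "h a \<in> borel_measurable lebesgue"
      using fg fh unfolding flow_over_time_def by blast+
    then show "(\<lambda>x. g a x + h a x) \<in> borel_measurable lebesgue" by (rule borel_measurable_add)
  next
    fix a x assume "a \<in> A"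
    then have "0 \<le> g a x" "g a x \<le> 1" "0 \<le> h a x" "h a x \<le> 1"
      using fg fh unfolding flow_over_time_def by blast+
    then show "0 \<le> g a x + h a x" "g a x + h a x \<le> 1" using dis[rule_format, of a x] by auto
  next
    fix a x assume "a \<in> A" "x \<notin> {0..<T - real (tau a)}"
    then have "g a x = 0" "h a x = 0" using fg fh unfolding flow_over_time_def by blast+
    then show "g a x + h a x = 0" by simp
  next
    fix v assume v: "v \<in> V - {s, t}"
    have a1: "AE x in lebesgue. (\<Sum>a\<in>{a\<in>A. he a = v}. g a (x - real (tau a))) = (\<Sum>a\<in>{a\<in>A. ta a = v}. g a x)"
      using fg v unfolding flow_over_time_def by blast
    have a2: "AE x in lebesgue. (\<Sum>a\<in>{a\<in>A. he a = v}. h a (x - real (tau a))) = (\<Sum>a\<in>{a\<in>A. ta a = v}. h a x)"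
      using fh v unfolding flow_over_time_def by blast
    show "AE x in lebesgue. (\<Sum>a\<in>{a\<in>A. he a = v}. g a (x - real (tau a)) + h a (x - real (tau a))) = (\<Sum>a\<in>{a\<in>A. ta a = v}. g a x + h a x)"
    proof (rule AE_mp[OF AE_conjI[OF a1 a2]], rule AE_I2, rule impI)
      fix x assume "(\<Sum>a\<in>{a\<in>A. he a = v}. g a (x - real (tau a))) = (\<Sum>a\<in>{a\<in>A. ta a = v}. g a x) \<and>
        (\<Sum>a\<in>{a\<in>A. he a = v}. h a (x - real (tau a))) = (\<Sum>a\<in>{a\<in>A. ta a = v}. h a x)"
      then show "(\<Sum>a\<in>{a\<in>A. he a = v}. g a (x - real (tau a)) + h a (x - real (tau a))) = (\<Sum>a\<in>{a\<in>A. ta a = v}. g a x + h a x)"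
        by (simp only: sum.distrib)
    qed
  qed
qed

lemma flow_X:
  assumes inst: "tmo_instance V A ta he s t d Delta"
  shows "X \<subseteq> A \<Longrightarrow> conserving X ta he s t \<Longrightarrow> p s = 0 \<Longrightarrow> p t = int T \<Longrightarrow> \<forall>a\<in>X. rr ta he tau p a \<ge> 0 \<Longrightarrow>
    \<exists>f. flow_over_time V A ta he s t tau (real T) f \<and> (\<forall>a. integrable lebesgue (f a)) \<and>
     (\<forall>a. a \<notin> X \<longrightarrow> (\<forall>x. f a x = 0)) \<and>
     flow_value A ta he t f \<ge> real_of_int (\<Sum>a\<in>X. rr ta he tau p a)"
proof (induction "card X" arbitrary: X rule: less_induct)
  case less
  have finA: "finite A" and st: "s \<noteq> t" "s \<in> V" "t \<in> V" and ends: "\<forall>a\<in>A. ta a \<in> V \<and> he a \<in> V"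
    and finV: "finite V"
    using inst unfolding tmo_instance_def Defs.digraph_def by auto
  have finX: "finite X" using less.prems(1) finA finite_subset by blast
  have endsX: "\<forall>a\<in>X. ta a \<in> V \<and> he a \<in> V" using less.prems(1) ends by auto
  have sumrr: "(\<Sum>a\<in>X. rr ta he tau p a) = int T * dv X ta he t - (\<Sum>a\<in>X. int (tau a))"
  proof -
    have "(\<Sum>a\<in>X. rr ta he tau p a) = (\<Sum>a\<in>X. p (he a) - p (ta a)) - (\<Sum>a\<in>X. int (tau a))"
      unfolding rr_def by (simp add: sum_subtractf)
    also have "(\<Sum>a\<in>X. p (he a) - p (ta a)) = (\<Sum>v\<in>V. p v * dv X ta he v)"
      by (rule dv_weighted[OF finX finV endsX, symmetric])
    also have "\<dots> = p s * dv X ta he s + p t * dv X ta he t"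
      by (rule dv_cons_sum[OF less.prems(2) finV st(2,3,1)])
    finally show ?thesis using less.prems(3,4) by simp
  qed
  show ?case
  proof (cases "dv X ta he t > 0")
    case False
    have "(\<Sum>a\<in>X. rr ta he tau p a) \<le> 0"
      unfolding sumrr using False by (smt (verit) mult_nonneg_nonpos of_nat_0_le_iff sum_nonneg)
    then have le: "real_of_int (\<Sum>a\<in>X. rr ta he tau p a) \<le> 0" by linarith
    have "flow_over_time V A ta he s t tau (real T) (\<lambda>a x. 0) \<and> flow_value A ta he t (\<lambda>a x. 0) = 0"
      by (rule flow_zero[OF inst])
    then show ?thesis using le by (intro exI[of _ "\<lambda>a x. 0"]) (simp del: of_int_sum)
  next
    case True
    obtain Q where ap: "pre_digraph.apath (sg V X ta he) s Q t"
      using path_exists[OF inst less.prems(1,2) True] by blast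
    note Qf = apath_st[OF ap st(1) less.prems(1)]
    have dQ: "distinct Q" using st_path_facts(9)[OF Qf(1)] .
    have neQ: "Q \<noteq> []" using st_path_facts(1)[OF Qf(1)] .
    let ?L = "sum_list (map tau Q)"
    have rrQ: "(\<Sum>a\<in>set Q. rr ta he tau p a) = int T - int ?L"
    proof -
      have "(\<Sum>a\<in>set Q. rr ta he tau p a) = sum_list (map (rr ta he tau p) Q)"
        using dQ by (simp add: sum_list_distinct_conv_sum_set)
      also have "\<dots> = sum_list (map (\<lambda>a. p (head (sg V X ta he) a) - p (tail (sg V X ta he) a)) Q) - sum_list (map (\<lambda>a. int (tau a)) Q)"
        unfolding rr_def by (simp add: sg_def sum_list_subtractf)
      also have "\<dots> = int T - int ?L"
      proof -
        have "int (sum_list (map tau Q)) = sum_list (map (\<lambda>a. int (tau a)) Q)" by (induction Q) auto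
        then show ?thesis using cas_tele[OF Qf(3), of p] less.prems(3,4) by simp
      qed
      finally show ?thesis .
    qed
    have "(\<Sum>a\<in>set Q. rr ta he tau p a) \<ge> 0"
      using less.prems(5) Qf(2) by (intro sum_nonneg) auto
    then have LT: "real ?L \<le> real T" using rrQ by simp
    obtain h where h: "flow_over_time V A ta he s t tau (real T) h" "\<forall>a. integrable lebesgue (h a)"
      "\<forall>a. a \<notin> set Q \<longrightarrow> (\<forall>x. h a x = 0)" "flow_value A ta he t h = real T - real ?L"
      using path_flow[OF inst Qf(1) LT] by blast
    let ?X = "X - set Q"
    have dvQ: "dv (set Q) ta he v = (if v = t then 1 else 0) - (if v = s then 1 else 0)" for v
    proof -
      have "dv (set Q) ta he v = sum_list (map (\<lambda>a. (if he a = v then 1 else 0) - (if ta a = v then 1 else 0)) Q)"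
        unfolding dv_def using dQ by (simp add: sum_list_distinct_conv_sum_set)
      also have "\<dots> = sum_list (map (\<lambda>a. (\<lambda>x. if x = v then 1 else 0) (head (sg V X ta he) a) - (\<lambda>x. if x = v then 1 else (0::int)) (tail (sg V X ta he) a)) Q)"
        by (simp add: sg_def)
      also have "\<dots> = (if v = t then 1 else 0) - (if v = s then 1 else 0)"
        using cas_tele[OF Qf(3), of "\<lambda>x. if x = v then 1 else (0::int)"] by simp
      finally show ?thesis .
    qed
    have dvX': "dv ?X ta he v = dv X ta he v - dv (set Q) ta he v" for v
      unfolding dv_def using finX Qf(2) by (simp add: sum_diff)
    have consX': "conserving ?X ta he s t"
      using less.prems(2) unfolding conserving_def dvX' dvQ by simp
    have card: "card ?X < card X"
    proof -
      obtain a where "a \<in> set Q" using neQ by (cases Q) auto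
      then show ?thesis using Qf(2) finX by (intro psubset_card_mono) auto
    qed
    obtain g where g: "flow_over_time V A ta he s t tau (real T) g" "\<forall>a. integrable lebesgue (g a)"
      "\<forall>a. a \<notin> ?X \<longrightarrow> (\<forall>x. g a x = 0)" "flow_value A ta he t g \<ge> real_of_int (\<Sum>a\<in>?X. rr ta he tau p a)"
    proof -
      have "?X \<subseteq> A" "\<forall>a\<in>?X. 0 \<le> rr ta he tau p a" using less.prems(1,5) by auto
      then show ?thesis using less.hyps[OF card _ consX' less.prems(3,4)] that by blast
    qed
    have dis: "\<forall>a x. g a x = 0 \<or> h a x = 0" using g(3) h(3) by blast
    note fa = flow_add[OF g(1) h(1) g(2) h(2) dis]
    have se: "(\<Sum>a\<in>X. rr ta he tau p a) = (\<Sum>a\<in>?X. rr ta he tau p a) + (int T - int ?L)"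
      using finX Qf(2) rrQ by (metis sum.subset_diff)
    have "real_of_int (\<Sum>a\<in>X. rr ta he tau p a) = real_of_int (\<Sum>a\<in>?X. rr ta he tau p a) + (real T - real ?L)"
      unfolding se by (simp only: of_int_add of_int_diff of_int_of_nat_eq)
    then have le: "real_of_int (\<Sum>a\<in>X. rr ta he tau p a) \<le> flow_value A ta he t (\<lambda>a x. g a x + h a x)"
      using g(4) h(4) fa(2) by linarith
    have z: "\<forall>a. a \<notin> X \<longrightarrow> (\<forall>x. g a x + h a x = 0)" using g(3) h(3) Qf(2) by auto
    show ?thesis
      by (rule exI[of _ "\<lambda>a x. g a x + h a x"]) (use fa(1) fa(3) z le in blast)
  qed
qed



context wf_digraph begin

lemma neg_cycle:
  fixes c :: "'b \<Rightarrow> real"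
  shows "awalk w C w \<Longrightarrow> awalk_cost c C < 0 \<Longrightarrow>
    \<exists>w' C'. awalk w' C' w' \<and> awalk_cost c C' < 0 \<and> distinct (map (tail G) C')"
proof (induction "length C" arbitrary: w C rule: less_induct)
  case less
  show ?case
  proof (cases "distinct (map (tail G) C)")
    case True
    then show ?thesis using less.prems by blast
  next
    case False
    obtain e C' where C: "C = e # C'" using less.prems(2) by (cases C) auto
    have e: "e \<in> arcs G" "tail G e = w" and aw': "awalk (head G e) C' w"
      using less.prems(1) unfolding C by (auto simp: awalk_Cons_iff)
    have C'ne: "C' \<noteq> []" using False C by auto
    have hl: "head G (last C') = w" using aw' C'ne
      by (metis awalk_verts_conv awalk_last_in_verts awalk_ends last_snoc awalk_conv awlast_of_awalk)
    have av: "awalk_verts (head G e) C' = map (tail G) C' @ [w]"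
      using C'ne hl by (simp add: awalk_verts_conv)
    have "\<not> distinct (awalk_verts (head G e) C')"
      using False e(2) unfolding av C by auto
    then obtain q r s where qrs: "C' = q @ r @ s" "0 < length r"
      and ws: "\<exists>y. awalk (head G e) q y \<and> awalk y r y \<and> awalk y s w"
      using awalk_not_distinct_decomp[OF aw'] by blast
    then obtain y where y: "awalk (head G e) q y" "awalk y r y" "awalk y s w" by blast
    have "awalk (head G e) (q @ s) w" using y by auto
    then have aw2: "awalk w (e # q @ s) w" using e by (auto simp: awalk_Cons_iff)
    have cost: "awalk_cost c C = awalk_cost c r + awalk_cost c (e # q @ s)"
      unfolding C qrs by simp
    show ?thesis
    proof (cases "awalk_cost c r < 0")
      case True
      have "length r < length C" unfolding C qrs by simp
      then show ?thesis using less.hyps y(2) True by blast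
    next
      case False
      then have "awalk_cost c (e # q @ s) < 0" using cost less.prems(2) by simp
      moreover have "length (e # q @ s) < length C" unfolding C qrs using qrs(2) by simp
      ultimately show ?thesis using less.hyps aw2 by blast
    qed
  qed
qed

end

context fin_digraph begin

lemma cost_Ints:
  assumes "\<forall>e\<in>arcs G. c e \<in> \<int>" "set P \<subseteq> arcs G"
  shows "awalk_cost c P \<in> \<int>"
  using assms(2)
proof (induction P)
  case Nil then show ?case by simp
next
  case (Cons a P) then show ?case using assms(1) by simp
qed

lemma potentials_exist:
  fixes c :: "'b \<Rightarrow> real"
  assumes nn: "\<And>w C. awalk w C w \<Longrightarrow> awalk_cost c C \<ge> 0"
    and int: "\<forall>e\<in>arcs G. c e \<in> \<int>"
  shows "\<exists>\<pi>. (\<forall>v\<in>verts G. \<pi> v \<in> \<int>) \<and> (\<forall>e\<in>arcs G. \<pi> (head G e) \<le> \<pi> (tail G e) + c e)"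
proof -
  define S where "S v = (\<lambda>(u,P). awalk_cost c P) ` {(u,P). apath u P v}" for v
  have finS: "finite (S v)" for v
  proof -
    have "{(u,P). apath u P v} \<subseteq> (\<lambda>(u,p,v). (u,p)) ` {(u,p,v). apath u p v}" by force
    then have "finite {(u,P). apath u P v}"
      using apaths_finite_triple by (meson finite_imageI finite_subset)
    then show ?thesis unfolding S_def by simp
  qed
  have neS: "S v \<noteq> {}" if "v \<in> verts G" for v
  proof -
    have "apath v [] v" using that by (simp add: apath_Nil_iff)
    then show ?thesis unfolding S_def by blast
  qed
  define \<pi> where "\<pi> v = Min (S v)" for v
  have noneg: "\<not> (\<exists>w C. awalk w C w \<and> w \<in> set (awalk_verts u p) \<and> awalk_cost c C < 0)" for u p
    using nn by (meson not_le)
  show ?thesis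
  proof (intro exI[of _ \<pi>] conjI ballI)
    fix v assume v: "v \<in> verts G"
    have "\<pi> v \<in> S v" unfolding \<pi>_def using finS neS[OF v] by (rule Min_in)
    then obtain u P where "apath u P v" "\<pi> v = awalk_cost c P" unfolding S_def by auto
    then show "\<pi> v \<in> \<int>" using cost_Ints[OF int] by (auto simp: apath_def awalk_def)
  next
    fix e assume e: "e \<in> arcs G"
    have tv: "tail G e \<in> verts G" using e by simp
    have "\<pi> (tail G e) \<in> S (tail G e)" unfolding \<pi>_def using finS neS[OF tv] by (rule Min_in)
    then obtain u P where P: "apath u P (tail G e)" "\<pi> (tail G e) = awalk_cost c P" unfolding S_def by auto
    have "awalk (tail G e) [e] (head G e)" using e by (rule arc_implies_awalk)
    then have aw: "awalk u (P @ [e]) (head G e)" using P(1) by (auto simp: apath_def)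
    have ap: "apath u (awalk_to_apath (P @ [e])) (head G e)" by (rule apath_awalk_to_apath[OF aw])
    have le: "awalk_cost c (awalk_to_apath (P @ [e])) \<le> awalk_cost c (P @ [e])"
      by (rule awalk_to_path_no_neg_cyc_cost[OF aw noneg])
    have "\<pi> (head G e) \<le> awalk_cost c (awalk_to_apath (P @ [e]))"
      unfolding \<pi>_def using finS ap unfolding S_def by (intro Min_le) auto
    then show "\<pi> (head G e) \<le> \<pi> (tail G e) + c e" using le P(2) by simp
  qed
qed

end



datatype 'a redge = Fwd 'a | Bwd 'a | RST | RTS

fun rt :: "('a \<Rightarrow> 'v) \<Rightarrow> ('a \<Rightarrow> 'v) \<Rightarrow> 'v \<Rightarrow> 'v \<Rightarrow> 'a redge \<Rightarrow> 'v" where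
  "rt ta he s t (Fwd a) = ta a"
| "rt ta he s t (Bwd a) = he a"
| "rt ta he s t RST = s"
| "rt ta he s t RTS = t"

fun rh :: "('a \<Rightarrow> 'v) \<Rightarrow> ('a \<Rightarrow> 'v) \<Rightarrow> 'v \<Rightarrow> 'v \<Rightarrow> 'a redge \<Rightarrow> 'v" where
  "rh ta he s t (Fwd a) = he a"
| "rh ta he s t (Bwd a) = ta a"
| "rh ta he s t RST = t"
| "rh ta he s t RTS = s"

fun lift :: "('a \<Rightarrow> int) \<Rightarrow> 'a redge \<Rightarrow> int" where
  "lift G (Fwd a) = G a"
| "lift G (Bwd a) = - G a"
| "lift G RST = 0"
| "lift G RTS = 0"

fun exT :: "'a redge \<Rightarrow> int" where
  "exT (Fwd a) = 0"
| "exT (Bwd a) = 0"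
| "exT RST = 1"
| "exT RTS = -1"

fun exv :: "'v \<Rightarrow> 'v \<Rightarrow> 'v \<Rightarrow> 'a redge \<Rightarrow> int" where
  "exv s t v (Fwd a) = 0"
| "exv s t v (Bwd a) = 0"
| "exv s t v RST = (if t = v then 1 else 0) - (if s = v then 1 else 0)"
| "exv s t v RTS = (if s = v then 1 else 0) - (if t = v then 1 else 0)"

definition icost :: "('a \<Rightarrow> nat) \<Rightarrow> int \<Rightarrow> 'a redge \<Rightarrow> int" where
  "icost tau T e = lift (\<lambda>a. int (tau a)) e + T * exT e"

definition rgraph :: "'v set \<Rightarrow> 'a set \<Rightarrow> ('a \<Rightarrow> 'v) \<Rightarrow> ('a \<Rightarrow> 'v) \<Rightarrow> 'v \<Rightarrow> 'v \<Rightarrow> 'a set \<Rightarrow> ('v, 'a redge) pre_digraph" where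
  "rgraph V A ta he s t X = \<lparr>verts = V, arcs = Fwd ` (A - X) \<union> Bwd ` X \<union> {RST, RTS},
     tail = rt ta he s t, head = rh ta he s t\<rparr>"

definition Phi :: "('a \<Rightarrow> 'v) \<Rightarrow> ('a \<Rightarrow> 'v) \<Rightarrow> 'v \<Rightarrow> ('a \<Rightarrow> nat) \<Rightarrow> int \<Rightarrow> 'a set \<Rightarrow> int" where
  "Phi ta he t tau T X = T * dv X ta he t - (\<Sum>a\<in>X. int (tau a))"

definition Dv :: "('a \<Rightarrow> 'v) \<Rightarrow> ('a \<Rightarrow> 'v) \<Rightarrow> 'v \<Rightarrow> 'a \<Rightarrow> int" where
  "Dv ta he v a = (if he a = v then 1 else 0) - (if ta a = v then 1 else 0)"

lemma dv_Dv: "dv X ta he v = sum (Dv ta he v) X"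
  unfolding dv_def Dv_def by simp

lemma lift_sum: "distinct C \<Longrightarrow> sum_list (map (lift G) C) = sum G (Fwd -` set C) - sum G (Bwd -` set C)"
proof (induction C)
  case Nil then show ?case by simp
next
  case (Cons e C)
  have f1: "finite (Fwd -` set C)" by (rule finite_vimageI) (auto simp: inj_def)
  have f2: "finite (Bwd -` set C)" by (rule finite_vimageI) (auto simp: inj_def)
  show ?case
  proof (cases e)
    case (Fwd a)
    have "Fwd -` set (e # C) = insert a (Fwd -` set C)" "Bwd -` set (e # C) = Bwd -` set C"
      using Fwd by auto
    moreover have "a \<notin> Fwd -` set C" using Cons.prems Fwd by auto
    ultimately show ?thesis using Cons f1 Fwd by simp
  next
    case (Bwd a)
    have "Bwd -` set (e # C) = insert a (Bwd -` set C)" "Fwd -` set (e # C) = Fwd -` set C"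
      using Bwd by auto
    moreover have "a \<notin> Bwd -` set C" using Cons.prems Bwd by auto
    ultimately show ?thesis using Cons f2 Bwd by simp
  next
    case RST
    have "Bwd -` set (e # C) = Bwd -` set C" "Fwd -` set (e # C) = Fwd -` set C"
      using RST by auto
    then show ?thesis using Cons RST by simp
  next
    case RTS
    have "Bwd -` set (e # C) = Bwd -` set C" "Fwd -` set (e # C) = Fwd -` set C"
      using RTS by auto
    then show ?thesis using Cons RTS by simp
  qed
qed

lemma aug_sum:
  fixes G :: "'a \<Rightarrow> int"
  assumes "finite X" "finite F" "F \<inter> X = {}" "B \<subseteq> X"
  shows "sum G ((X - B) \<union> F) = sum G X + sum G F - sum G B"
proof -
  have "sum G ((X - B) \<union> F) = sum G (X - B) + sum G F"
    using assms by (intro sum.union_disjoint) auto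
  also have "sum G (X - B) = sum G X - sum G B"
    using assms by (intro sum_diff) (auto intro: finite_subset)
  finally show ?thesis by simp
qed

lemma res_div:
  "(if rh ta he s t e = v then 1 else 0) - (if rt ta he s t e = v then 1 else (0::int)) = lift (Dv ta he v) e + exv s t v e"
  by (cases e) (simp_all add: Dv_def)

lemma exv_zero: "v \<noteq> s \<Longrightarrow> v \<noteq> t \<Longrightarrow> exv s t v e = 0"
  by (cases e) auto

lemma exv_t: "s \<noteq> t \<Longrightarrow> exv s t t e = exT e"
  by (cases e) auto

lemma sum_list_zero: "(\<And>e. e \<in> set C \<Longrightarrow> f e = 0) \<Longrightarrow> sum_list (map f C) = (0::int)"
  by (induction C) auto

lemma dual_exists:
  assumes inst: "tmo_instance V A ta he s t d Delta"
  shows "\<exists>X p. X \<subseteq> A \<and> conserving X ta he s t \<and> p s = 0 \<and> p t = T \<and>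
     (\<forall>a\<in>X. rr ta he tau p a \<ge> 0) \<and> (\<forall>a\<in>A - X. rr ta he tau p a \<le> 0)"
proof -
  have finA: "finite A" and st: "s \<noteq> t" "s \<in> V" "t \<in> V" and ends: "\<forall>a\<in>A. ta a \<in> V \<and> he a \<in> V"
    and finV: "finite V"
    using inst unfolding tmo_instance_def Defs.digraph_def by auto
  define Fam where "Fam = {X. X \<subseteq> A \<and> conserving X ta he s t}"
  have finF: "finite Fam" unfolding Fam_def using finA by (auto intro: finite_subset[of _ "Pow A"])
  have neF: "{} \<in> Fam" unfolding Fam_def conserving_def dv_def by simp
  define m where "m = Max (Phi ta he t tau T ` Fam)"
  have "m \<in> Phi ta he t tau T ` Fam" unfolding m_def using finF neF by (intro Max_in) auto
  then obtain X where X: "X \<in> Fam" "Phi ta he t tau T X = m" by auto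
  have Xmax: "Phi ta he t tau T Y \<le> Phi ta he t tau T X" if "Y \<in> Fam" for Y
    unfolding X(2) m_def using finF that by (intro Max_ge) auto
  have XA: "X \<subseteq> A" and consX: "conserving X ta he s t" using X(1) unfolding Fam_def by auto
  have finX: "finite X" using XA finA finite_subset by blast
  let ?G = "rgraph V A ta he s t X"
  have fd: "fin_digraph ?G"
  proof (unfold_locales)
    fix e assume "e \<in> arcs ?G"
    then show "tail ?G e \<in> verts ?G" "head ?G e \<in> verts ?G"
      using ends XA st by (auto simp: rgraph_def)
  next
    show "finite (verts ?G)" using finV by (simp add: rgraph_def)
    show "finite (arcs ?G)" using finA finX by (simp add: rgraph_def)
  qed
  interpret R: fin_digraph ?G by (rule fd)
  define c where "c e = real_of_int (icost tau T e)" for e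
  have nn: "R.awalk_cost c C \<ge> 0" if aw: "R.awalk w C w" for w C
  proof (rule ccontr)
    assume neg0: "\<not> R.awalk_cost c C \<ge> 0"
    have "R.awalk_cost c C < 0" using neg0 by linarith
    then obtain w' C' where C': "R.awalk w' C' w'" "R.awalk_cost c C' < 0" "distinct (map (tail ?G) C')"
      using R.neg_cycle[OF aw] by blast
    have dC: "distinct C'" using C'(3) by (simp add: distinct_map)
    have casC: "R.cas w' C' w'" and sC: "set C' \<subseteq> arcs ?G" using C'(1) unfolding R.awalk_def by auto
    define F where "F = Fwd -` set C'"
    define B where "B = Bwd -` set C'"
    have FA: "F \<subseteq> A - X" using sC unfolding F_def by (auto simp: rgraph_def)
    have BX: "B \<subseteq> X" using sC unfolding B_def by (auto simp: rgraph_def)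
    have finF': "finite F" using FA finA finite_subset by blast
    define X' where "X' = (X - B) \<union> F"
    have FX: "F \<inter> X = {}" using FA by auto
    have sumX': "sum G X' = sum G X + sum_list (map (lift G) C')" for G
      using aug_sum[OF finX finF' FX BX, of G] lift_sum[OF dC, of G]
      unfolding X'_def F_def B_def by simp
    have closed: "sum_list (map (lift (Dv ta he v)) C') + sum_list (map (exv s t v) C') = 0" for v
    proof -
      have "sum_list (map (\<lambda>e. (\<lambda>x. if x = v then 1 else (0::int)) (head ?G e) - (\<lambda>x. if x = v then 1 else 0) (tail ?G e)) C') = 0"
        using cas_tele[OF casC, of "\<lambda>x. if x = v then 1 else (0::int)"] by simp
      then have "sum_list (map (\<lambda>e. lift (Dv ta he v) e + exv s t v e) C') = 0"
        by (simp add: rgraph_def res_div)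
      then show ?thesis by (simp add: sum_list_addf)
    qed
    have dvX': "dv X' ta he v = dv X ta he v + sum_list (map (lift (Dv ta he v)) C')" for v
      unfolding dv_Dv by (rule sumX')
    have consX': "conserving X' ta he s t"
      unfolding conserving_def
    proof (intro allI impI)
      fix v assume v: "v \<noteq> s" "v \<noteq> t"
      have "sum_list (map (exv s t v) C') = 0" using exv_zero[OF v] by (intro sum_list_zero) auto
      then show "dv X' ta he v = 0" using closed[of v] consX v unfolding dvX' conserving_def by simp
    qed
    have X'F: "X' \<in> Fam" unfolding Fam_def using consX' FA XA unfolding X'_def by auto
    have et: "sum_list (map (exv s t t) C') = sum_list (map exT C')"
      by (induction C') (simp_all add: exv_t[OF st(1)])
    have "Phi ta he t tau T X' = Phi ta he t tau T X - sum_list (map (icost tau T) C')"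
    proof -
      have "Phi ta he t tau T X' = T * (dv X ta he t + sum_list (map (lift (Dv ta he t)) C'))
          - ((\<Sum>a\<in>X. int (tau a)) + sum_list (map (lift (\<lambda>a. int (tau a))) C'))"
        unfolding Phi_def dvX' sumX' ..
      also have "sum_list (map (lift (Dv ta he t)) C') = - sum_list (map exT C')"
        using closed[of t] et by simp
      also have "sum_list (map (icost tau T) C') = sum_list (map (lift (\<lambda>a. int (tau a))) C') + T * sum_list (map exT C')"
        unfolding icost_def by (simp add: sum_list_addf sum_list_const_mult)
      ultimately show ?thesis unfolding Phi_def by (simp add: algebra_simps)
    qed
    moreover have "R.awalk_cost c C' = real_of_int (sum_list (map (icost tau T) C'))"
      unfolding R.awalk_cost_def c_def by (induction C') auto
    ultimately have "Phi ta he t tau T X' > Phi ta he t tau T X" using C'(2) by simp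
    then show False using Xmax[OF X'F] by simp
  qed
  have intc: "\<forall>e\<in>arcs ?G. c e \<in> \<int>"
  proof
    fix e show "c e \<in> \<int>" unfolding c_def by (rule Ints_of_int)
  qed
  have "\<exists>\<pi>. (\<forall>v\<in>verts ?G. \<pi> v \<in> \<int>) \<and> (\<forall>e\<in>arcs ?G. \<pi> (head ?G e) \<le> \<pi> (tail ?G e) + c e)"
    by (rule R.potentials_exist[OF _ intc]) (rule nn, assumption)
  then
  obtain \<pi> where pi: "\<forall>v\<in>verts ?G. \<pi> v \<in> \<int>" "\<forall>e\<in>arcs ?G. \<pi> (head ?G e) \<le> \<pi> (tail ?G e) + c e"
    by (elim exE conjE)
  have piI: "\<pi> v = real_of_int \<lfloor>\<pi> v\<rfloor>" if "v \<in> V" for v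
  proof -
    have "\<pi> v \<in> \<int>" using pi(1) that by (simp add: rgraph_def)
    then obtain k where "\<pi> v = of_int k" by (auto elim: Ints_cases)
    then show ?thesis by simp
  qed
  define p where "p v = \<lfloor>\<pi> v\<rfloor> - \<lfloor>\<pi> s\<rfloor>" for v
  have arcsG: "Fwd a \<in> arcs ?G" if "a \<in> A - X" for a using that by (simp add: rgraph_def)
  have arcsB: "Bwd a \<in> arcs ?G" if "a \<in> X" for a using that by (simp add: rgraph_def)
  have e1: "\<pi> t \<le> \<pi> s + real_of_int T" using pi(2) by (auto simp: rgraph_def c_def icost_def)
  have e2: "\<pi> s \<le> \<pi> t - real_of_int T" using pi(2) by (auto simp: rgraph_def c_def icost_def)
  have pt: "p t = T"
  proof -
    have "real_of_int \<lfloor>\<pi> t\<rfloor> = real_of_int \<lfloor>\<pi> s\<rfloor> + real_of_int T"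
      using e1 e2 piI[OF st(2)] piI[OF st(3)] by linarith
    then show ?thesis unfolding p_def by linarith
  qed
  show ?thesis
  proof (intro exI[of _ X] exI[of _ p] conjI ballI)
    show "X \<subseteq> A" "conserving X ta he s t" using XA consX by auto
    show "p s = 0" unfolding p_def by simp
    show "p t = T" by (rule pt)
  next
    fix a assume a: "a \<in> X"
    have "\<pi> (head ?G (Bwd a)) \<le> \<pi> (tail ?G (Bwd a)) + c (Bwd a)" using pi(2) arcsB[OF a] by blast
    then have "\<pi> (ta a) \<le> \<pi> (he a) + c (Bwd a)" by (simp add: rgraph_def)
    moreover have "ta a \<in> V" "he a \<in> V" using a XA ends by auto
    ultimately have "real_of_int \<lfloor>\<pi> (ta a)\<rfloor> \<le> real_of_int \<lfloor>\<pi> (he a)\<rfloor> - real (tau a)"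
      using piI by (simp add: c_def icost_def)
    then show "rr ta he tau p a \<ge> 0" unfolding rr_def p_def by linarith
  next
    fix a assume a: "a \<in> A - X"
    have "\<pi> (head ?G (Fwd a)) \<le> \<pi> (tail ?G (Fwd a)) + c (Fwd a)" using pi(2) arcsG[OF a] by blast
    then have "\<pi> (he a) \<le> \<pi> (ta a) + c (Fwd a)" by (simp add: rgraph_def)
    moreover have "ta a \<in> V" "he a \<in> V" using a ends by auto
    ultimately have "real_of_int \<lfloor>\<pi> (he a)\<rfloor> \<le> real_of_int \<lfloor>\<pi> (ta a)\<rfloor> + real (tau a)"
      using piI by (simp add: c_def icost_def)
    then show "rr ta he tau p a \<le> 0" unfolding rr_def p_def by linarith
  qed
qed


theorem mainTheorem6:
  fixes V :: "'v set" and A :: "'a set" and tail head :: "'a \<Rightarrow> 'v" and s t :: 'v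
    and tau :: "'a \<Rightarrow> nat" and d Delta :: nat
  assumes "tmo_instance V A tail head s t d Delta"
    and "\<exists>p. is_st_path A tail head s t p"
  shows "\<exists>f. flow_over_time V A tail head s t tau (real (tmo_opt A tail head s t tau d Delta + Delta)) f
             \<and> flow_value A tail head t f \<ge> real d * real Delta"
proof -
  let ?T = "tmo_opt A tail head s t tau d Delta + Delta"
  obtain q where q: "is_st_path A tail head s t q" using assms(2) by blast
  obtain P lam where PL: "feasible_routing A tail head s t tau d Delta P lam"
    "makespan tau d P lam = tmo_opt A tail head s t tau d Delta"
    using opt_exists[OF assms(1) q] by blast
  obtain X p where Xp: "X \<subseteq> A" "conserving X tail head s t" "p s = 0" "p t = int ?T"
     "\<forall>a\<in>X. rr tail head tau p a \<ge> 0" "\<forall>a\<in>A - X. rr tail head tau p a \<le> 0"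
    using dual_exists[OF assms(1), where tau=tau and T="int ?T"] by blast
  have fin: "finite A" using assms(1) unfolding tmo_instance_def Defs.digraph_def by blast
  have cb: "int (d * Delta) \<le> (\<Sum>a\<in>A. nat (rr tail head tau p a))"
    using cut_bound[OF assms(1) PL(1), where p=p] Xp(3,4) PL(2) by simp
  have "(\<Sum>a\<in>A. int (nat (rr tail head tau p a))) = (\<Sum>a\<in>A. if a \<in> X then rr tail head tau p a else 0)"
    by (rule sum.cong) (use Xp in force)+
  also have "\<dots> = (\<Sum>a\<in>X. rr tail head tau p a)"
    using fin Xp(1) by (simp add: sum.If_cases Int_absorb1)
  finally have eq: "(\<Sum>a\<in>A. int (nat (rr tail head tau p a))) = (\<Sum>a\<in>X. rr tail head tau p a)" .
  obtain f where f: "flow_over_time V A tail head s t tau (real ?T) f"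
     "flow_value A tail head t f \<ge> real_of_int (\<Sum>a\<in>X. rr tail head tau p a)"
    using flow_X[OF assms(1) Xp(1,2,3,4,5)] by blast
  have "int (d * Delta) \<le> (\<Sum>a\<in>X. rr tail head tau p a)"
    using cb eq by (metis of_nat_sum)
  then have "real d * real Delta \<le> real_of_int (\<Sum>a\<in>X. rr tail head tau p a)"
    by (metis of_int_le_iff of_int_of_nat_eq of_nat_mult)
  then show ?thesis using f by (intro exI[of _ f]) auto
qed

end
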